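(* For any $\beta\in[0,\infty)$ there exists a weight sequence $\boldsymbol{M}^\beta$ such that: (i) $\boldsymbol{M}^\beta$ satisfies $\operatorname{(sm)}$; (ii) $\boldsymbol{M}^\beta$ does not satisfy $\operatorname{(dc)}$ (and hence not $\operatorname{(mg)}$ either); (iii) $\gamma(\boldsymbol{M}^\beta)=\beta$.
   Context: A weight sequence is a sequence $\boldsymbol{M}=(M_p)_{p\in\mathbb{N}_0}$ of positive reals with $M_0=1$, $M_p^2\le M_{p-1}M_{p+1}$ ($p\ge1$) and $m_p=M_{p+1}/M_p\to\infty$. $\operatorname{(sm)}$: $\log(m_{p+1}/m_p)\le C_0H^{p+1}$ for all $p$, some $C_0>0$, $H>1$. $\operatorname{(dc)}$: $M_{p+1}\le C_0H^{p+1}M_p$ for all $p$, some $C_0>0$, $H>1$. $\operatorname{(mg)}$: $M_{p+q}\le C_0H^{p+q}M_pM_q$ for all $p,q$, some $C_0>0,H>1$. Almost increasing: $c_p\le ac_q$ for $q\ge p$, some $a>0$. $\gamma(\boldsymbol{M})=\sup\{\mu>0:(m_p/(p+1)^\mu)_p\text{ almost increasing}\}\in[0,\infty]$. *)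

theory Defs
  imports "HOL-Analysis.Analysis"
begin

definition quot_seq :: "(nat \<Rightarrow> real) \<Rightarrow> nat \<Rightarrow> real" where
  "quot_seq M p = M (Suc p) / M p"

definition weight_sequence :: "(nat \<Rightarrow> real) \<Rightarrow> bool" where
  "weight_sequence M \<longleftrightarrow> (\<forall>p. M p > 0) \<and> M 0 = 1 \<and>
     (\<forall>p\<ge>1. (M p)\<^sup>2 \<le> M (p - 1) * M (p + 1)) \<and>
     filterlim (quot_seq M) at_top sequentially"

definition cond_sm :: "(nat \<Rightarrow> real) \<Rightarrow> bool" where
  "cond_sm M \<longleftrightarrow> (\<exists>C0>0. \<exists>H>1. \<forall>p.
     ln (quot_seq M (p + 1) / quot_seq M p) \<le> C0 * H ^ (p + 1))"

definition cond_dc :: "(nat \<Rightarrow> real) \<Rightarrow> bool" where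
  "cond_dc M \<longleftrightarrow> (\<exists>C0>0. \<exists>H>1. \<forall>p. M (p + 1) \<le> C0 * H ^ (p + 1) * M p)"

definition cond_mg :: "(nat \<Rightarrow> real) \<Rightarrow> bool" where
  "cond_mg M \<longleftrightarrow> (\<exists>C0>0. \<exists>H>1. \<forall>p q. M (p + q) \<le> C0 * H ^ (p + q) * M p * M q)"

definition almost_increasing :: "(nat \<Rightarrow> real) \<Rightarrow> bool" where
  "almost_increasing c \<longleftrightarrow> (\<exists>a>0. \<forall>p q. p \<le> q \<longrightarrow> c p \<le> a * c q)"

text \<open>gamma(M) as an extended real; the supremum of the empty set is taken to be 0,
  so that gamma(M) lies in [0, infinity] as in the paper.\<close>
definition gamma_index :: "(nat \<Rightarrow> real) \<Rightarrow> ereal" where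
  "gamma_index M = Sup (insert 0 (ereal ` {\<mu>. \<mu> > 0 \<and>
      almost_increasing (\<lambda>p. quot_seq M p / (real (p + 1)) powr \<mu>)}))"

end

theory Submission
  imports Defs
begin

primrec hh :: "nat \<Rightarrow> nat" where
  "hh 0 = 2"
| "hh (Suc p) = (if Suc p = hh p * hh p then Suc p else hh p)"

lemma hh_inv: "2 \<le> hh p \<and> hh p \<le> p + 2 \<and> p < hh p * hh p"
proof (induction p)
  case 0 then show ?case by simp
next
  case (Suc p)
  show ?case
  proof (cases "Suc p = hh p * hh p")
    case True
    have "4 \<le> hh p * hh p" using Suc mult_le_mono[of 2 "hh p" 2 "hh p"] by simp
    then have "2 \<le> Suc p" using True by simp
    then have "Suc p < Suc p * Suc p" by (metis One_nat_def lessI less_le_trans mult_less_mono2 mult_1_right numeral_2_eq_2 zero_less_Suc)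
    moreover have "hh (Suc p) = Suc p" unfolding hh.simps(2) by (rule if_P[OF True])
    ultimately show ?thesis using \<open>2 \<le> Suc p\<close> by simp
  next
    case False
    then show ?thesis using Suc by auto
  qed
qed

lemma hh_Suc_ge: "hh p \<le> hh (Suc p)"
  using hh_inv[of p] by auto

lemma hh_mono: "p \<le> q \<Longrightarrow> hh p \<le> hh q"
  using hh_Suc_ge by (metis incseq_SucI incseq_def)

lemma hh_const: "p \<le> j \<Longrightarrow> j < hh p * hh p \<Longrightarrow> hh j = hh p"
proof (induction j)
  case 0 then show ?case by simp
next
  case (Suc j)
  show ?case
  proof (cases "p = Suc j")
    case True then show ?thesis by simp
  next
    case False
    then have "p \<le> j" using Suc by simp
    then have "hh j = hh p" using Suc by simp
    then show ?thesis using Suc by auto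
  qed
qed

lemma hh_jump: "hh (hh p * hh p) = hh p * hh p"
proof -
  define n where "n = hh p * hh p"
  have "p < n" using hh_inv[of p] n_def by simp
  then obtain j where j: "n = Suc j" "p \<le> j" by (metis less_imp_Suc_add le_add1)
  have "hh j = hh p" using hh_const[of p j] j n_def by simp
  then show ?thesis using j n_def by simp
qed

lemma hh_fix: "\<exists>q\<ge>N. hh q = q"
proof (induction N)
  case 0 show ?case using hh_jump[of 0] by (metis zero_le)
next
  case (Suc N)
  then obtain q where q: "q \<ge> N" "hh q = q" by blast
  have "hh (q*q) = q*q" using hh_jump[of q] q by simp
  moreover have "q \<ge> 2" using hh_inv[of q] q by simp
  then have "q * q \<ge> 2 * q" by simp
  then have "q * q \<ge> Suc N" using q \<open>q \<ge> 2\<close> by linarith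
  ultimately show ?case by blast
qed

definition mm :: "real \<Rightarrow> nat \<Rightarrow> real" where
  "mm b p = (real p + 1) powr b * exp ((real (hh p))^2)"

definition MM :: "real \<Rightarrow> nat \<Rightarrow> real" where
  "MM b p = (\<Prod>i<p. mm b i)"

lemma mm_pos: "mm b p > 0"
  unfolding mm_def by simp

lemma MM_pos: "MM b p > 0"
  unfolding MM_def using mm_pos by (simp add: prod_pos)

lemma MM_Suc: "MM b (Suc p) = MM b p * mm b p"
  unfolding MM_def by simp

lemma quot_MM: "quot_seq (MM b) p = mm b p"
  unfolding quot_seq_def using MM_Suc[of b p] MM_pos[of b p] by simp

lemma mm_mono_Suc: assumes "b \<ge> 0" shows "mm b p \<le> mm b (Suc p)"
proof -
  have "(real p + 1) powr b \<le> (real (Suc p) + 1) powr b"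
    using assms by (intro powr_mono2) auto
  moreover have "exp ((real (hh p))^2) \<le> exp ((real (hh (Suc p)))^2)"
    using hh_Suc_ge[of p] by (simp add: power_mono)
  ultimately show ?thesis unfolding mm_def by (intro mult_mono) auto
qed

lemma mm_ge_exp: assumes "b \<ge> 0" shows "mm b p \<ge> exp (real p)"
proof -
  have "(real p + 1) powr b \<ge> 1" using assms by (simp add: ge_one_powr_ge_zero)
  moreover have "real p \<le> (real (hh p))^2"
  proof -
    have "p \<le> hh p * hh p" using hh_inv[of p] by simp
    then have "real p \<le> real (hh p * hh p)" by linarith
    then show ?thesis by (simp add: power2_eq_square)
  qed
  then have "exp (real p) \<le> exp ((real (hh p))^2)" by simp
  ultimately show ?thesis unfolding mm_def
    using mult_mono[of 1 "(real p + 1) powr b" "exp (real p)" "exp ((real (hh p))^2)"] by simp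
qed

lemma ws: assumes "b \<ge> 0" shows "weight_sequence (MM b)"
  unfolding weight_sequence_def
proof (intro conjI allI impI)
  show "MM b p > 0" for p by (rule MM_pos)
  show "MM b 0 = 1" unfolding MM_def by simp
  show "(MM b p)\<^sup>2 \<le> MM b (p - 1) * MM b (p + 1)" if p1: "p \<ge> 1" for p
  proof -
    obtain q where q: "p = Suc q" using p1 by (cases p) auto
    have "MM b (p+1) = MM b q * mm b q * mm b p" using q MM_Suc by simp
    moreover have "MM b p = MM b q * mm b q" using q MM_Suc by simp
    moreover have "mm b q \<le> mm b p" using q mm_mono_Suc assms by simp
    ultimately show ?thesis using q MM_pos[of b q] mm_pos[of b q]
      by (simp add: power2_eq_square mult_left_mono)
  qed
  show "filterlim (quot_seq (MM b)) at_top sequentially"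
    unfolding quot_MM
  proof (rule filterlim_at_top_mono[of "\<lambda>p. exp (real p)"])
    show "filterlim (\<lambda>p. exp (real p)) at_top sequentially"
      using filterlim_compose[OF exp_at_top filterlim_real_sequentially] by simp
    show "\<forall>\<^sub>F x in sequentially. exp (real x) \<le> mm b x"
      using mm_ge_exp assms by simp
  qed
qed

lemma ln_mm: "ln (mm b p) = b * ln (real p + 1) + (real (hh p))^2"
  unfolding mm_def by (simp add: ln_mult ln_powr)

lemma sq_bound: "(real (p + 3))^2 \<le> 9 * 4 ^ (p + 1)"
proof -
  have "p + 1 < 2 ^ (p + 1)" by (rule less_exp)
  then have "real (p + 1) \<le> 2 ^ (p + 1)"
    by (metis less_imp_le of_nat_le_iff of_nat_numeral of_nat_power)
  then have "real (p + 3) \<le> 3 * 2 ^ (p + 1)" by simp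
  then have "(real (p + 3))^2 \<le> (3 * 2 ^ (p + 1))^2" by (intro power_mono) auto
  also have "\<dots> = 9 * ((2::real) ^ (p + 1) * 2 ^ (p + 1))" by (simp add: power2_eq_square)
  also have "\<dots> = 9 * 4 ^ (p + 1)" by (simp add: power_mult_distrib[symmetric])
  finally show ?thesis .
qed

lemma sm: assumes "b \<ge> 0" shows "cond_sm (MM b)"
proof -
  have "ln (mm b (p + 1) / mm b p) \<le> (b + 9) * 4 ^ (p + 1)" for p
  proof -
  have "ln (mm b (p + 1) / mm b p) = ln (mm b (p+1)) - ln (mm b p)"
    using mm_pos[of b p] mm_pos[of b "p+1"] by (simp add: ln_div)
  also have "\<dots> = b * (ln (real p + 2) - ln (real p + 1)) + ((real (hh (p+1)))^2 - (real (hh p))^2)"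
    unfolding ln_mm by (simp add: algebra_simps)
  also have "\<dots> \<le> b * 1 + 9 * 4 ^ (p + 1)"
  proof (rule add_mono)
    have "ln (real p + 2) \<le> ln (2 * (real p + 1))" by simp
    also have "\<dots> = ln 2 + ln (real p + 1)" by (rule ln_mult_pos) auto
    finally have "ln (real p + 2) - ln (real p + 1) \<le> 1" using ln_2_less_1 by simp
    then show "b * (ln (real p + 2) - ln (real p + 1)) \<le> b * 1"
      using assms by (intro mult_left_mono) auto
    have "hh (p+1) \<le> p + 3" using hh_inv[of "p+1"] by simp
    then have "(real (hh (p+1)))^2 \<le> (real (p + 3))^2" by (intro power_mono) auto
    then show "(real (hh (p+1)))^2 - (real (hh p))^2 \<le> 9 * 4 ^ (p + 1)"
      using sq_bound[of p] by (smt (verit) zero_le_power2)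
  qed
  also have "\<dots> \<le> (b + 9) * 4 ^ (p + 1)"
  proof -
    have "(1::real) \<le> 4 ^ (p+1)" by (rule one_le_power) simp
    then have "b * 1 \<le> b * 4 ^ (p+1)" using assms by (intro mult_left_mono) auto
    then show ?thesis by (simp add: algebra_simps)
  qed
  finally show "ln (mm b (p + 1) / mm b p) \<le> (b + 9) * 4 ^ (p + 1)" .
  qed
  moreover have "b + 9 > 0" "(4::real) > 1" using assms by auto
  ultimately show ?thesis unfolding cond_sm_def quot_MM by blast
qed

lemma mm_ge_exp_hh: assumes "b \<ge> 0" shows "exp ((real (hh p))^2) \<le> mm b p"
proof -
  have "(real p + 1) powr b \<ge> 1" using assms by (simp add: ge_one_powr_ge_zero)
  then show ?thesis unfolding mm_def
    using mult_right_mono[of 1 "(real p + 1) powr b" "exp ((real (hh p))^2)"] by simp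
qed

lemma not_dc: assumes "b \<ge> 0" shows "\<not> cond_dc (MM b)"
proof
  assume "cond_dc (MM b)"
  then obtain C H where CH: "C > 0" "H > 1" and le: "\<And>p. MM b (p + 1) \<le> C * H ^ (p + 1) * MM b p"
    unfolding cond_dc_def by blast
  have mle: "mm b p \<le> C * H ^ (p + 1)" for p
    using le[of p] MM_Suc[of b p] MM_pos[of b p] by (simp add: mult.commute)
  define L where "L = \<bar>ln C\<bar> + 2 * ln H + 1"
  have lnH: "ln H > 0" using CH by simp
  obtain q where q: "q \<ge> nat \<lceil>L\<rceil>" "hh q = q" using hh_fix by blast
  have qL: "real q \<ge> L" using q(1) by linarith
  have L1: "L \<ge> 1" unfolding L_def using lnH by simp
  have q1: "real q \<ge> 1" using qL L1 by simp
  have "ln C + (real q + 1) * ln H < real q * \<bar>ln C\<bar> + 2 * real q * ln H + real q"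
  proof -
    have "real q * \<bar>ln C\<bar> \<ge> \<bar>ln C\<bar>" using q1 by (simp add: mult_right_mono[of 1 "real q", simplified])
    moreover have "2 * real q * ln H \<ge> (real q + 1) * ln H" using q1 lnH by (intro mult_right_mono) auto
    ultimately show ?thesis using q1 by linarith
  qed
  also have "\<dots> = real q * L"
    unfolding L_def by (simp add: algebra_simps)
  also have "\<dots> \<le> real q * real q" using qL q1 by (intro mult_left_mono) auto
  finally have ineq: "ln C + (real q + 1) * ln H < (real q)^2" by (simp add: power2_eq_square)
  have "C * H ^ (q + 1) = exp (ln C + (real q + 1) * ln H)"
  proof -
    have "H ^ (q + 1) = H powr (real (q + 1))" using CH by (simp only: powr_realpow)
    also have "\<dots> = exp ((real q + 1) * ln H)" using CH by (simp add: powr_def mult.commute)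
    finally show ?thesis using CH by (simp add: exp_add)
  qed
  also have "\<dots> < exp ((real q)^2)" using ineq by simp
  also have "\<dots> \<le> mm b q" using mm_ge_exp_hh[OF assms, of q] q(2) by simp
  finally show False using mle[of q] by simp
qed

lemma not_mg: assumes "b \<ge> 0" shows "\<not> cond_mg (MM b)"
proof
  assume "cond_mg (MM b)"
  then obtain C H where CH: "C > 0" "H > 1" and le: "\<And>p q. MM b (p + q) \<le> C * H ^ (p + q) * MM b p * MM b q"
    unfolding cond_mg_def by blast
  have "MM b (p + 1) \<le> (C * MM b 1) * H ^ (p + 1) * MM b p" for p
    using le[of p 1] by (simp add: algebra_simps)
  moreover have "C * MM b 1 > 0" using CH MM_pos by simp
  ultimately have "cond_dc (MM b)" unfolding cond_dc_def using CH by blast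
  then show False using not_dc assms by blast
qed

lemma cform: "quot_seq (MM b) p / (real (p + 1)) powr \<mu> = (real p + 1) powr (b - \<mu>) * exp ((real (hh p))^2)"
  unfolding quot_MM mm_def by (simp add: powr_diff add.commute)

lemma gam_le: assumes "\<mu> \<le> b"
  shows "almost_increasing (\<lambda>p. quot_seq (MM b) p / (real (p + 1)) powr \<mu>)"
proof -
  let ?c = "\<lambda>p. (real p + 1) powr (b - \<mu>) * exp ((real (hh p))^2)"
  have "?c p \<le> ?c (Suc p)" for p
  proof -
    have "(real p + 1) powr (b - \<mu>) \<le> (real (Suc p) + 1) powr (b - \<mu>)"
      using assms by (intro powr_mono2) auto
    moreover have "exp ((real (hh p))^2) \<le> exp ((real (hh (Suc p)))^2)"
      using hh_Suc_ge[of p] by (simp add: power_mono)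
    ultimately show ?thesis by (intro mult_mono) auto
  qed
  then have inc: "incseq ?c" by (rule incseq_SucI)
  show ?thesis unfolding almost_increasing_def cform
    using incseq_def[THEN iffD1, OF inc] by (intro exI[of _ 1]) auto
qed

lemma gam_not: assumes "\<mu> > b"
  shows "\<not> almost_increasing (\<lambda>p. quot_seq (MM b) p / (real (p + 1)) powr \<mu>)"
proof
  assume "almost_increasing (\<lambda>p. quot_seq (MM b) p / (real (p + 1)) powr \<mu>)"
  then obtain a where a: "a > 0" and le: "\<And>p q. p \<le> q \<Longrightarrow>
     (real p + 1) powr (b - \<mu>) * exp ((real (hh p))^2) \<le> a * ((real q + 1) powr (b - \<mu>) * exp ((real (hh q))^2))"
    unfolding almost_increasing_def cform by blast
  define e where "e = \<mu> - b"
  have e: "e > 0" using assms e_def by simp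
  define K where "K = (a + 1) powr (1 / e)"
  have K: "K > 0" unfolding K_def using a by simp
  obtain q where q: "q \<ge> nat \<lceil>2 * K\<rceil> + 2" "hh q = q" using hh_fix by blast
  have q2: "q \<ge> 2" using q by simp
  have qK: "real q \<ge> 2 * K" using q(1) by linarith
  define r where "r = q * q - 1"
  have qq: "q * q \<ge> 2 * q" using q2 by simp
  have r: "q \<le> r" "r < q * q" using qq q2 unfolding r_def by linarith+
  have hr: "hh r = q" using hh_const[OF r(1)] r(2) q(2) by simp
  have r1: "real r + 1 = real q * real q" unfolding r_def using qq q2
    by (metis Suc_diff_1 add.commute le_add2 le_trans mult_pos_pos of_nat_Suc of_nat_mult
        plus_1_eq_Suc zero_less_numeral less_le_trans numeral_2_eq_2 zero_less_Suc)
  define E where "E = exp ((real q)^2)"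
  have Ep: "E > 0" unfolding E_def by simp
  have "(real q + 1) powr (- e) * E \<le> a * ((real q * real q) powr (- e) * E)"
    using le[OF r(1)] hr q(2) r1 unfolding E_def e_def by simp
  then have A: "(real q + 1) powr (- e) \<le> a * (real q * real q) powr (- e)"
    using Ep by (simp add: mult.assoc[symmetric])
  define x where "x = real q + 1"
  define y where "y = real q * real q"
  have xp: "x > 0" and yp: "y > 0" unfolding x_def y_def using q2 by auto
  have "y powr e \<le> a * x powr e"
    using A xp yp unfolding x_def[symmetric] y_def[symmetric]
    by (simp add: powr_minus divide_simps mult.commute)
  moreover have "x * K \<le> y"
  proof -
    have "x * K \<le> 2 * real q * K" unfolding x_def using q2 K by (intro mult_right_mono) auto
    also have "\<dots> \<le> real q * real q" using qK q2 by (simp add: mult.assoc mult_left_mono)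
    finally show ?thesis unfolding y_def .
  qed
  then have "(x * K) powr e \<le> y powr e" using xp K e by (intro powr_mono2) auto
  moreover have "(x * K) powr e = x powr e * (a + 1)"
    using xp K e a unfolding K_def by (simp add: powr_mult powr_powr)
  ultimately have "x powr e * (a + 1) \<le> a * x powr e" by simp
  moreover have "x powr e > 0" using xp by simp
  ultimately show False by (simp add: algebra_simps)
qed

theorem corollary4p12:
  fixes \<beta> :: real
  assumes "\<beta> \<ge> 0"
  shows "\<exists>M. weight_sequence M \<and> cond_sm M \<and> \<not> cond_dc M \<and> \<not> cond_mg M
             \<and> gamma_index M = ereal \<beta>"
proof (intro exI[of _ "MM \<beta>"] conjI)
  show "weight_sequence (MM \<beta>)" using ws assms .
  show "cond_sm (MM \<beta>)" using sm assms .
  show "\<not> cond_dc (MM \<beta>)" using not_dc assms .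
  show "\<not> cond_mg (MM \<beta>)" using not_mg assms .
  show "gamma_index (MM \<beta>) = ereal \<beta>"
    unfolding gamma_index_def
  proof (rule Sup_eqI)
    fix y assume "y \<in> insert 0 (ereal ` {\<mu>. \<mu> > 0 \<and>
      almost_increasing (\<lambda>p. quot_seq (MM \<beta>) p / (real (p + 1)) powr \<mu>)})"
    then show "y \<le> ereal \<beta>" using gam_not assms by (auto simp: not_less[symmetric])
  next
    fix y assume H: "\<And>z. z \<in> insert 0 (ereal ` {\<mu>. \<mu> > 0 \<and>
      almost_increasing (\<lambda>p. quot_seq (MM \<beta>) p / (real (p + 1)) powr \<mu>)}) \<Longrightarrow> z \<le> y"
    show "ereal \<beta> \<le> y"
    proof (cases "\<beta> = 0")
      case True then show ?thesis using H[of 0] by (simp add: zero_ereal_def)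
    next
      case False
      then have "\<beta> > 0" using assms by simp
      then show ?thesis using H[of "ereal \<beta>"] gam_le[of \<beta> \<beta>] by auto
    qed
  qed
qed

end
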